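(* Let $\mathcal{X}$ be a compact metric space and $k:\mathcal{X}^2\to\mathbb{R}$ a continuous, universal kernel with $\sup_{x\in\mathcal{X}}\sqrt{k(x,x)}\le K<\infty$, and let $\mathcal{H}$ be its reproducing kernel Hilbert space. Let $\ell:\mathbb{R}\to\mathbb{R}$ be non-decreasing, convex and non-negative, and suppose that for every $M>0$ there is $z_0$ such that $g\ge M$ for all $z\ge z_0$ and all $g\in\partial\ell(z)$. Let $(x_1,y_1),\ldots,(x_{m_1},y_{m_1})\in\mathcal{X}\times\{+1,-1\}$, let $M_p=\{i:y_i=+1\}$, $M_n=\{i:y_i=-1\}$, and suppose both are non-empty. Let $\lambda>0$. Then the problem $$\min_{f\in\mathcal{H},\,b\in\mathbb{R},\,\rho\in\mathbb{R}}\ -2\rho+\frac{1}{m_1}\sum_{i=1}^{m_1}\ell\big(\rho-y_i(f(x_i)+b)\big)\quad\text{subject to }\|f\|_{\mathcal{H}}^2\le\lambda^2$$ has an optimal solution. Moreover there is no duality gap: its optimal value equals $$-\inf\Big\{c_p+c_n+\lambda\|f_p-f_n\|_{\mathcal{H}}\;:\;c_p,c_n\in\mathbb{R},\ f_p\in\mathcal{U}_p[c_p],\ f_n\in\mathcal{U}_n[c_n]\Big\},$$ where for $o\in\{p,n\}$ and $c\in\mathbb{R}$, $$\mathcal{U}_o[c]=\Big\{\sum_{i\in M_o}\alpha_i k(\cdot,x_i)\;:\;\sum_{i\in M_o}\alpha_i=1,\ \alpha_i\ge0\ (i\in M_o),\ \frac{1}{m_1}\sum_{i\in M_o}\ell^*(m_1\alpha_i)\le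 c\Big\},$$ i.e. the Lagrangian dual of the first problem is this minimum-distance problem between the uncertainty sets.
   Context: A kernel is universal if its RKHS is dense in the space of continuous functions on $\mathcal{X}$ with respect to the supremum norm. $\partial\ell(z)$ is the subdifferential of $\ell$ at $z$, and $\ell^*(x)=\sup_{z\in\mathbb{R}}\{xz-\ell(z)\}$ is the convex conjugate. *)

theory Defs
  imports "HOL-Analysis.Analysis"
begin

text \<open>The RKHS of a kernel k on X is represented (up to isometric isomorphism)
 by a real Hilbert space 'h together with the canonical feature map
 \<phi> x = k(\<cdot>,x): k x y = \<langle>\<phi> x, \<phi> y\<rangle> and the span of \<phi>(X) is dense.
 The element h of 'h stands for the function x \<mapsto> \<langle>h, \<phi> x\<rangle>, with RKHS norm norm h.\<close>
definition is_rkhs_feature :: "'a set \<Rightarrow> ('a \<Rightarrow> 'a \<Rightarrow> real) \<Rightarrow> ('a \<Rightarrow> 'h::{real_inner,complete_space}) \<Rightarrow> bool" where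
  "is_rkhs_feature X k \<phi> \<longleftrightarrow>
     (\<forall>x\<in>X. \<forall>y\<in>X. k x y = \<phi> x \<bullet> \<phi> y) \<and> closure (span (\<phi> ` X)) = UNIV"

definition universal_kernel :: "'a::topological_space set \<Rightarrow> ('a \<Rightarrow> 'h::real_inner) \<Rightarrow> bool" where
  "universal_kernel X \<phi> \<longleftrightarrow>
     (\<forall>g. continuous_on X g \<longrightarrow> (\<forall>e>0. \<exists>h. \<forall>x\<in>X. \<bar>g x - h \<bullet> \<phi> x\<bar> < e))"

definition subdiff :: "(real \<Rightarrow> real) \<Rightarrow> real \<Rightarrow> real set" where
  "subdiff l z = {g. \<forall>w. l w \<ge> l z + g * (w - z)}"

definition conj_fun :: "(real \<Rightarrow> real) \<Rightarrow> real \<Rightarrow> ereal" where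
  "conj_fun l v = (SUP z. ereal (v * z - l z))"

definition uset :: "(real \<Rightarrow> real) \<Rightarrow> nat \<Rightarrow> ('a \<Rightarrow> 'h::real_inner) \<Rightarrow> (nat \<Rightarrow> 'a) \<Rightarrow> nat set \<Rightarrow> real \<Rightarrow> 'h set" where
  "uset l m1 \<phi> x Mo c =
     {(\<Sum>i\<in>Mo. \<alpha> i *\<^sub>R \<phi> (x i)) | \<alpha>. sum \<alpha> Mo = 1 \<and> (\<forall>i\<in>Mo. \<alpha> i \<ge> 0) \<and>
        ereal (1 / real m1) * (\<Sum>i\<in>Mo. conj_fun l (real m1 * \<alpha> i)) \<le> ereal c}"

definition primal_obj :: "(real \<Rightarrow> real) \<Rightarrow> nat \<Rightarrow> ('a \<Rightarrow> 'h::real_inner) \<Rightarrow> (nat \<Rightarrow> 'a) \<Rightarrow> (nat \<Rightarrow> real) \<Rightarrow> 'h \<Rightarrow> real \<Rightarrow> real \<Rightarrow> real" where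
  "primal_obj l m1 \<phi> x y f b \<rho> =
     - 2 * \<rho> + (1 / real m1) * (\<Sum>i=1..m1. l (\<rho> - y i * (f \<bullet> \<phi> (x i) + b)))"

end

theory Submission
  imports Defs
begin


lemma sep0:
  fixes K :: "'a::real_inner set"
  assumes "compact K" "convex K" "K \<noteq> {}" "0 \<notin> K"
  shows "\<exists>p. p \<noteq> 0 \<and> (\<forall>q\<in>K. p \<bullet> p \<le> p \<bullet> q)"
proof -
  obtain p where pK: "p \<in> K" and pmin: "\<forall>q\<in>K. norm p \<le> norm q"
    using continuous_attains_inf[OF assms(1,3), of norm] continuous_on_norm_id by blast
  have "p \<noteq> 0" using pK assms(4) by auto
  moreover have "p \<bullet> p \<le> p \<bullet> q" if q: "q \<in> K" for q
  proof (rule ccontr)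
    assume "\<not> ?thesis"
    define c where "c = p \<bullet> (q - p)"
    have c: "c < 0" using \<open>\<not> p \<bullet> p \<le> p \<bullet> q\<close> by (simp add: c_def inner_diff_right)
    define n where "n = (q - p) \<bullet> (q - p)"
    have "q \<noteq> p" using c c_def by auto
    hence n: "n > 0" by (simp add: n_def)
    define t where "t = min 1 (-c/n)"
    have t: "0 < t" "t \<le> 1" "t * n \<le> -c"
      using c n by (auto simp: t_def min_def field_simps)
    have "(1 - t) *\<^sub>R p + t *\<^sub>R q \<in> K"
      using assms(2) pK q t unfolding convex_def by auto
    moreover have "(1 - t) *\<^sub>R p + t *\<^sub>R q = p + t *\<^sub>R (q - p)" by (simp add: algebra_simps)
    ultimately have "norm p \<le> norm (p + t *\<^sub>R (q - p))" using pmin by metis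
    hence "(norm p)^2 \<le> (norm (p + t *\<^sub>R (q - p)))^2" by (simp add: power_mono)
    hence "p \<bullet> p \<le> (p + t *\<^sub>R (q - p)) \<bullet> (p + t *\<^sub>R (q - p))" by (simp add: power2_norm_eq_inner)
    also have "\<dots> = p \<bullet> p + 2 * t * c + t * t * n"
      by (simp add: c_def n_def inner_add_left inner_add_right inner_commute algebra_simps)
    finally have "0 \<le> t * (2 * c + t * n)" by (simp add: algebra_simps)
    moreover have "2 * c + t * n < 0" using t c by linarith
    ultimately show False using t(1) by (simp add: zero_le_mult_iff)
  qed
  ultimately show ?thesis by blast
qed

lemma proj_from_compact:
  fixes S :: "'a::real_inner set"
  assumes cpt: "\<And>R. compact (span S \<inter> cball 0 R)"
  shows "\<exists>p\<in>span S. \<forall>s\<in>span S. (f - p) \<bullet> s = 0"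
proof -
  let ?C = "span S \<inter> cball 0 (2 * norm f)"
  have "0 \<in> ?C" by (simp add: span_zero)
  then obtain p where pC: "p \<in> ?C" and pm: "\<forall>q\<in>?C. norm (f - p) \<le> norm (f - q)"
  proof -
    have "continuous_on ?C (\<lambda>q. norm (f - q))" by (intro continuous_intros)
    moreover have "?C \<noteq> {}" using \<open>0 \<in> ?C\<close> by blast
    ultimately have "\<exists>p\<in>?C. \<forall>q\<in>?C. norm (f - p) \<le> norm (f - q)"
      using continuous_attains_inf[OF cpt] by blast
    thus ?thesis using that by blast
  qed
  have pmin: "norm (f - p) \<le> norm (f - q)" if "q \<in> span S" for q
  proof (cases "norm q \<le> 2 * norm f")
    case True thus ?thesis using pm that by auto
  next
    case False
    have "norm (f - p) \<le> norm (f - 0)" using pm \<open>0 \<in> ?C\<close> by blast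
    also have "\<dots> \<le> norm (f - q)" using False norm_triangle_ineq2[of q f] by (simp add: norm_minus_commute)
    finally show ?thesis .
  qed
  have "(f - p) \<bullet> s = 0" if s: "s \<in> span S" for s
  proof (rule ccontr)
    assume ne: "(f - p) \<bullet> s \<noteq> 0"
    define e where "e = f - p"
    define c where "c = e \<bullet> s"
    have "s \<noteq> 0" using ne by auto
    hence ss: "s \<bullet> s > 0" by simp
    define t where "t = c / (s \<bullet> s)"
    have "p + t *\<^sub>R s \<in> span S" using pC s by (simp add: span_add span_scale)
    hence "norm (f - p) \<le> norm (f - (p + t *\<^sub>R s))" using pmin by blast
    hence "(norm e)^2 \<le> (norm (e - t *\<^sub>R s))^2" by (simp add: e_def power_mono algebra_simps)
    hence "e \<bullet> e \<le> (e - t *\<^sub>R s) \<bullet> (e - t *\<^sub>R s)" by (simp add: power2_norm_eq_inner)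
    also have "\<dots> = e \<bullet> e - 2 * t * c + t * t * (s \<bullet> s)"
      by (simp add: c_def inner_diff_left inner_diff_right inner_commute algebra_simps)
    also have "\<dots> = e \<bullet> e - c * c / (s \<bullet> s)" using ss by (simp add: t_def field_simps power2_eq_square)
    finally have "c * c / (s \<bullet> s) \<le> 0" by simp
    moreover have "c \<noteq> 0" using ne by (simp add: c_def e_def)
    hence "c * c > 0" by (metis linorder_neqE_linordered_idom mult_neg_neg mult_pos_pos)
    ultimately show False using ss by (simp add: divide_le_0_iff)
  qed
  thus ?thesis using pC by blast
qed

lemma fd_compact:
  fixes S :: "'a::real_inner set"
  assumes "finite S"
  shows "compact (span S \<inter> cball 0 R)"
  using assms
proof (induction S arbitrary: R rule: finite_induct)
  case empty
  have "span {} \<inter> cball 0 R \<subseteq> {0::'a}" by auto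
  thus ?case by (meson finite_imp_compact finite.emptyI finite_insert finite_subset)
next
  case (insert a S)
  obtain p where p: "p \<in> span S" "\<forall>s\<in>span S. (a - p) \<bullet> s = 0"
    using proj_from_compact[OF insert.IH] by blast
  define e where "e = a - p"
  show ?case
  proof (cases "e = 0")
    case True
    hence "a \<in> span S" using p e_def by simp
    thus ?thesis using insert.IH span_redundant by metis
  next
    case False
    define Img where "Img = (\<lambda>(c, v). v + c *\<^sub>R e) ` ({-R / norm e..R / norm e} \<times> (span S \<inter> cball 0 R))"
    have cImg: "compact Img" unfolding Img_def
      by (intro compact_continuous_image compact_Times insert.IH compact_Icc) (auto intro!: continuous_intros simp: case_prod_unfold)
    have eS: "e \<in> span (insert a S)" unfolding e_def
      using p(1) by (meson span_base insertI1 span_diff span_mono subset_insertI subsetD)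
    have sub1: "Img \<subseteq> span (insert a S)"
      unfolding Img_def using eS
      by (auto intro!: span_add span_scale simp: span_mono[OF subset_insertI, THEN subsetD])
    have sub2: "span (insert a S) \<inter> cball 0 R \<subseteq> Img"
    proof
      fix z assume z: "z \<in> span (insert a S) \<inter> cball 0 R"
      then obtain k where k: "z - k *\<^sub>R a \<in> span S" using span_breakdown_eq by blast
      define v where "v = z - k *\<^sub>R a + k *\<^sub>R p"
      have vS: "v \<in> span S" unfolding v_def using k p(1) by (simp add: span_add span_scale)
      have zv: "z = v + k *\<^sub>R e" by (simp add: v_def e_def algebra_simps)
      have "orthogonal v (k *\<^sub>R e)" using p(2) vS unfolding orthogonal_def e_def
        by (simp add: inner_commute)
      hence nz: "(norm z)^2 = (norm v)^2 + (norm (k *\<^sub>R e))^2" using zv norm_add_Pythagorean by metis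
      have "norm z \<le> R" using z by auto
      hence "(norm z)^2 \<le> R^2" by (simp add: power_mono)
      moreover have "0 \<le> (norm v)^2" "0 \<le> (\<bar>k\<bar> * norm e)^2" by auto
      moreover have nz': "(norm z)^2 = (norm v)^2 + (\<bar>k\<bar> * norm e)^2" using nz by simp
      ultimately have "(norm v)^2 \<le> R^2" "(\<bar>k\<bar> * norm e)^2 \<le> R^2" by linarith+
      moreover have R0: "0 \<le> R" using \<open>norm z \<le> R\<close> norm_ge_zero[of z] by linarith
      ultimately have "norm v \<le> R" "\<bar>k\<bar> * norm e \<le> R"
        using power2_le_imp_le by blast+
      hence "norm v \<le> R" "\<bar>k\<bar> \<le> R / norm e" using False by (auto simp: field_simps)
      hence "k \<in> {-R / norm e..R / norm e}" by auto
      thus "z \<in> Img" unfolding Img_def using vS zv \<open>norm v \<le> R\<close>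
        by (intro image_eqI[of _ _ "(k, v)"]) auto
    qed
    have "span (insert a S) \<inter> cball 0 R = Img \<inter> cball 0 R" using sub1 sub2 by blast
    thus ?thesis using cImg by (simp add: compact_Int_closed)
  qed
qed



definition sl :: "(real \<Rightarrow> real) \<Rightarrow> real \<Rightarrow> real \<Rightarrow> real" where
  "sl l u w = (l w - l u) / (w - u)"

lemma sl_mono:
  assumes conv: "convex_on UNIV l" and "w1 < w2" "w1 \<noteq> u" "w2 \<noteq> u"
  shows "sl l u w1 \<le> sl l u w2"
proof -
  have e: "sl l u w = (l u - l w) / (u - w)" for w
    unfolding sl_def by (metis minus_diff_eq minus_divide_divide)
  consider "u < w1" | "w2 < u" | "w1 < u \<and> u < w2" using assms by linarith
  thus ?thesis
  proof cases
    case 1 thus ?thesis using convex_on_slope_le(1)[OF conv, of u w2 w1] assms by (simp add: e)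
  next
    case 2 thus ?thesis using convex_on_slope_le(2)[OF conv, of w1 u w2] assms
      by (simp add: sl_def)
  next
    case 3
    have "(l w1 - l u) / (w1 - u) \<le> (l u - l w2) / (u - w2)"
      using convex_on_slope_le[OF conv, of w1 w2 u] 3 by simp
    thus ?thesis using e[of w2] unfolding sl_def by linarith
  qed
qed

definition rd :: "(real \<Rightarrow> real) \<Rightarrow> real \<Rightarrow> real" where
  "rd l u = Inf (sl l u ` {u<..})"
definition ld :: "(real \<Rightarrow> real) \<Rightarrow> real \<Rightarrow> real" where
  "ld l u = Sup (sl l u ` {..<u})"

lemma bdd_r: assumes "convex_on UNIV l" shows "bdd_below (sl l u ` {u<..})"
  unfolding bdd_below_def using sl_mono[OF assms, of "u - 1" _ u]
  by (intro exI[of _ "sl l u (u - 1)"]) auto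

lemma bdd_l: assumes "convex_on UNIV l" shows "bdd_above (sl l u ` {..<u})"
  unfolding bdd_above_def using sl_mono[OF assms, of _ "u + 1" u]
  by (intro exI[of _ "sl l u (u + 1)"]) auto

lemma rd_le: assumes "convex_on UNIV l" "u < w" shows "rd l u \<le> sl l u w"
  unfolding rd_def using assms by (intro cInf_lower bdd_r) auto

lemma le_ld: assumes "convex_on UNIV l" "w < u" shows "sl l u w \<le> ld l u"
  unfolding ld_def using assms by (intro cSup_upper bdd_l) auto

lemma ld_le_rd: assumes conv: "convex_on UNIV l" shows "ld l u \<le> rd l u"
  unfolding ld_def
proof (rule cSup_least)
  show "sl l u ` {..<u} \<noteq> {}" by auto
  fix s assume "s \<in> sl l u ` {..<u}"
  then obtain w where w: "w < u" "s = sl l u w" by auto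
  show "s \<le> rd l u" unfolding rd_def
    by (rule cInf_greatest) (use w sl_mono[OF conv] in auto)
qed

lemma subgrad_ld_rd:
  assumes conv: "convex_on UNIV l" and g: "ld l u \<le> g" "g \<le> rd l u"
  shows "g \<in> subdiff l u"
  unfolding subdiff_def
proof (intro CollectI allI)
  fix w
  consider "w = u" | "u < w" | "w < u" by linarith
  thus "l u + g * (w - u) \<le> l w"
  proof cases
    case 2
    hence "g \<le> (l w - l u) / (w - u)" using rd_le[OF conv 2] g unfolding sl_def by linarith
    thus ?thesis using 2 by (simp add: field_simps)
  next
    case 3
    hence "(l w - l u) / (w - u) \<le> g" using le_ld[OF conv 3] g unfolding sl_def by linarith
    thus ?thesis using 3 by (simp add: field_simps)
  qed simp
qed

lemma subgrad_nonneg: assumes "mono l" "g \<in> subdiff l u" shows "0 \<le> g"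
proof -
  have "l u + g * ((u - 1) - u) \<le> l (u - 1)" using assms(2) unfolding subdiff_def by blast
  moreover have "l (u - 1) \<le> l u" using assms(1) by (simp add: monoD)
  ultimately show ?thesis by simp
qed

lemma conj_subgrad: assumes "g \<in> subdiff l u" shows "conj_fun l g = ereal (g * u - l u)"
  unfolding conj_fun_def
proof (rule antisym)
  show "(SUP z. ereal (g * z - l z)) \<le> ereal (g * u - l u)"
  proof (rule SUP_least)
    fix z
    have "l u + g * (z - u) \<le> l z" using assms unfolding subdiff_def by blast
    thus "ereal (g * z - l z) \<le> ereal (g * u - l u)" by (simp add: algebra_simps)
  qed
  show "ereal (g * u - l u) \<le> (SUP z. ereal (g * z - l z))" by (rule SUP_upper) auto
qed

lemma fenchel_young: "ereal (v * u - l u) \<le> conj_fun l v"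
  unfolding conj_fun_def by (rule SUP_upper) auto

lemma descent_1d:
  assumes conv: "convex_on UNIV l" and e: "\<epsilon> > 0"
  shows "eventually (\<lambda>t. l (u + t * d) - l u \<le> t * ((if 0 \<le> d then rd l u else ld l u) * d + \<epsilon>)) (at_right 0)"
proof -
  have key: "l (u + t * d) - l u = sl l u (u + t * d) * (t * d)" if "t * d \<noteq> 0" for t
    using that unfolding sl_def by simp
  consider "d = 0" | "d > 0" | "d < 0" by linarith
  thus ?thesis
  proof cases
    case 1 thus ?thesis using e by (auto simp: eventually_at_right_field intro!: exI[of _ 1])
  next
    case 2
    have "Inf (sl l u ` {u<..}) < rd l u + \<epsilon> / d" using e 2 by (simp add: rd_def)
    then obtain w where w: "u < w" "sl l u w < rd l u + \<epsilon> / d"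
      using cInf_lessD[of "sl l u ` {u<..}"] by auto
    show ?thesis unfolding eventually_at_right_field
    proof (intro exI[of _ "(w - u) / d"] conjI allI impI)
      show "0 < (w - u) / d" using w 2 by simp
      fix t assume t: "0 < t" "t < (w - u) / d"
      have td: "t * d > 0" "u + t * d < w" using t 2 by (auto simp: field_simps)
      have "sl l u (u + t * d) \<le> sl l u w"
        by (rule sl_mono[OF conv td(2)]) (use td w in auto)
      hence "sl l u (u + t * d) \<le> rd l u + \<epsilon> / d" using w by simp
      hence "sl l u (u + t * d) * (t * d) \<le> (rd l u + \<epsilon> / d) * (t * d)"
        using td by (simp add: mult_right_mono)
      also have "\<dots> = t * (rd l u * d + \<epsilon>)" using 2 by (simp add: field_simps)
      finally have fin: "sl l u (u + t * d) * (t * d) \<le> t * (rd l u * d + \<epsilon>)" .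
      have k: "l (u + t * d) - l u = sl l u (u + t * d) * (t * d)" by (rule key) (use td in auto)
      have iff: "(if 0 \<le> d then rd l u else ld l u) = rd l u" using 2 by simp
      show "l (u + t * d) - l u \<le> t * ((if 0 \<le> d then rd l u else ld l u) * d + \<epsilon>)"
        unfolding iff k by (rule fin)
    qed
  next
    case 3
    have "ld l u + \<epsilon> / d < Sup (sl l u ` {..<u})" using e 3 by (simp add: ld_def divide_pos_neg)
    then obtain w where w: "w < u" "ld l u + \<epsilon> / d < sl l u w"
      using less_cSupD[of "sl l u ` {..<u}"] by auto
    show ?thesis unfolding eventually_at_right_field
    proof (intro exI[of _ "(u - w) / (- d)"] conjI allI impI)
      show "0 < (u - w) / (- d)" using w 3 by (simp add: divide_pos_neg)
      fix t assume t: "0 < t" "t < (u - w) / (- d)"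
      have td1: "t * d < 0" using t(1) 3 by (simp add: mult_pos_neg)
      have td: "t * d < 0" "w < u + t * d" using td1 t 3 by (auto simp: field_simps)
      have "sl l u w \<le> sl l u (u + t * d)"
        by (rule sl_mono[OF conv td(2)]) (use td w in auto)
      hence "ld l u + \<epsilon> / d \<le> sl l u (u + t * d)" using w by simp
      hence "sl l u (u + t * d) * (t * d) \<le> (ld l u + \<epsilon> / d) * (t * d)"
        using td by (simp add: mult_right_mono_neg)
      also have "\<dots> = t * (ld l u * d + \<epsilon>)" using 3 by (simp add: field_simps)
      finally have fin: "sl l u (u + t * d) * (t * d) \<le> t * (ld l u * d + \<epsilon>)" .
      have k: "l (u + t * d) - l u = sl l u (u + t * d) * (t * d)" by (rule key) (use td in auto)
      have iff: "(if 0 \<le> d then rd l u else ld l u) = ld l u" using 3 by simp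
      show "l (u + t * d) - l u \<le> t * ((if 0 \<le> d then rd l u else ld l u) * d + \<epsilon>)"
        unfolding iff k by (rule fin)
    qed
  qed
qed

lemma growth:
  assumes conv: "convex_on UNIV l" and nn: "\<forall>z. l z \<ge> 0"
    and sup: "\<forall>M>0. \<exists>z0. \<forall>z\<ge>z0. \<forall>g\<in>subdiff l z. g \<ge> M" and M: "M > 0"
  shows "\<exists>z0. \<forall>u. M * (u - z0) \<le> l u"
proof -
  obtain z0 where z0: "\<forall>z\<ge>z0. \<forall>g\<in>subdiff l z. g \<ge> M" using sup M by blast
  have gs: "rd l z0 \<in> subdiff l z0" using subgrad_ld_rd[OF conv ld_le_rd[OF conv]] by simp
  hence gM: "rd l z0 \<ge> M" using z0 by auto
  have "M * (u - z0) \<le> l u" for u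
  proof (cases "u \<ge> z0")
    case True
    have "l z0 + rd l z0 * (u - z0) \<le> l u" using gs unfolding subdiff_def by blast
    moreover have "M * (u - z0) \<le> rd l z0 * (u - z0)" using gM True by (simp add: mult_right_mono)
    ultimately show ?thesis using nn by (smt (verit))
  next
    case False
    hence "M * (u - z0) \<le> 0" using M by (intro less_imp_le mult_pos_neg) auto
    thus ?thesis using nn by (smt (verit))
  qed
  thus ?thesis by blast
qed



lemma primal_exists:
  fixes \<psi> :: "nat \<Rightarrow> 'h::real_inner" and y :: "nat \<Rightarrow> real" and l :: "real \<Rightarrow> real"
  assumes conv: "convex_on UNIV l" and nn: "\<forall>z. l z \<ge> 0"
    and gr: "\<And>M. M > 0 \<Longrightarrow> \<exists>z0. \<forall>u. M * (u - z0) \<le> l u"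
    and ip: "ip \<in> {1..m}" "y ip = 1" and jn: "jn \<in> {1..m}" "y jn = -1" and lam: "lam > 0"
  defines "F \<equiv> \<lambda>f b \<rho>. -2*\<rho> + (1/real m) * (\<Sum>i=1..m. l (\<rho> - y i * (f \<bullet> \<psi> i + b)))"
  shows "\<exists>f b \<rho>. norm f \<le> lam \<and> (\<forall>f' b' \<rho>'. norm f' \<le> lam \<longrightarrow> F f b \<rho> \<le> F f' b' \<rho>')"
proof -
  have m: "real m > 0" using ip by auto
  have lcont: "continuous_on UNIV l" using convex_on_continuous[OF open_UNIV conv] .
  define \<Psi> where "\<Psi> = \<psi> ` {1..m}"
  have fin\<Psi>: "finite \<Psi>" by (simp add: \<Psi>_def)
  define B where "B = lam * (\<Sum>i=1..m. norm (\<psi> i))"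
  have ipb: "\<bar>f \<bullet> \<psi> i\<bar> \<le> B" if "norm f \<le> lam" "i \<in> {1..m}" for f i
  proof -
    have "\<bar>f \<bullet> \<psi> i\<bar> \<le> norm f * norm (\<psi> i)" by (rule Cauchy_Schwarz_ineq2)
    also have "\<dots> \<le> lam * norm (\<psi> i)" using that by (simp add: mult_right_mono)
    also have "\<dots> \<le> B" unfolding B_def using lam that
      by (intro mult_left_mono member_le_sum) auto
    finally show ?thesis .
  qed
  obtain z0 where z0: "\<forall>u. (2 * real m) * (u - z0) \<le> l u" using gr[of "2 * real m"] m by auto
  define c0 where "c0 = F 0 0 0"
  define R where "R = \<bar>c0\<bar> + 4 * B + 4 * \<bar>z0\<bar> + 1"
  have B0: "B \<ge> 0" unfolding B_def using lam by (simp add: sum_nonneg)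
  have bound: "\<bar>\<rho>\<bar> \<le> R \<and> \<bar>b\<bar> \<le> R" if f: "norm f \<le> lam" and Fc: "F f b \<rho> \<le> c0" for f b \<rho>
  proof -
    define L where "L i = l (\<rho> - y i * (f \<bullet> \<psi> i + b))" for i
    have Lnn: "L i \<ge> 0" for i using nn by (simp add: L_def)
    have ne: "ip \<noteq> jn" using ip jn by auto
    have "(\<Sum>i\<in>{ip, jn}. L i) \<le> (\<Sum>i=1..m. L i)"
      by (rule sum_mono2) (use ip jn Lnn in auto)
    hence sumge: "L ip + L jn \<le> (\<Sum>i=1..m. L i)" using ne by simp
    have Fe: "F f b \<rho> = -2*\<rho> + (\<Sum>i=1..m. L i) / real m" by (simp add: F_def L_def)
    have L1: "L ip \<ge> 2 * real m * (\<rho> - f \<bullet> \<psi> ip - b - z0)"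
      using z0[rule_format, of "\<rho> - f \<bullet> \<psi> ip - b"] ip by (simp add: L_def algebra_simps)
    have L2: "L jn \<ge> 2 * real m * (\<rho> + f \<bullet> \<psi> jn + b - z0)"
      using z0[rule_format, of "\<rho> + f \<bullet> \<psi> jn + b"] jn by (simp add: L_def algebra_simps)
    have S0: "(\<Sum>i=1..m. L i) \<ge> 0" using Lnn by (simp add: sum_nonneg)
    have dv: "a \<le> (\<Sum>i=1..m. L i) / real m" if "a * real m \<le> (\<Sum>i=1..m. L i)" for a
      using that m by (simp add: pos_le_divide_eq)
    have S1: "0 \<le> (\<Sum>i=1..m. L i) / real m" using S0 m by simp
    have S2: "2 * ((\<rho> - f \<bullet> \<psi> ip - b - z0) + (\<rho> + f \<bullet> \<psi> jn + b - z0)) \<le> (\<Sum>i=1..m. L i) / real m"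
      by (rule dv) (use sumge L1 L2 in \<open>simp add: algebra_simps\<close>)
    have S3: "2 * (\<rho> - f \<bullet> \<psi> ip - b - z0) \<le> (\<Sum>i=1..m. L i) / real m"
      by (rule dv) (use sumge L1 Lnn[of jn] in \<open>simp add: algebra_simps\<close>)
    have S4: "2 * (\<rho> + f \<bullet> \<psi> jn + b - z0) \<le> (\<Sum>i=1..m. L i) / real m"
      by (rule dv) (use sumge L2 Lnn[of ip] in \<open>simp add: algebra_simps\<close>)
    have a1: "\<bar>f \<bullet> \<psi> ip\<bar> \<le> B" "\<bar>f \<bullet> \<psi> jn\<bar> \<le> B" using ipb f ip jn by auto
    show ?thesis using S1 S2 S3 S4 a1 Fe Fc B0 unfolding R_def by (simp add: abs_le_iff) linarith
  qed
  define C where "C = {-R..R} \<times> ({-R..R} \<times> (span \<Psi> \<inter> cball 0 lam))"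
  define G where "G = (\<lambda>z::real \<times> real \<times> 'h. F (snd (snd z)) (fst (snd z)) (fst z))"
  have cC: "compact C" unfolding C_def by (intro compact_Times compact_Icc fd_compact fin\<Psi>)
  have R0: "R \<ge> 0" unfolding R_def using B0 by simp
  have z0C: "(0, 0, 0) \<in> C" unfolding C_def using R0 lam by (auto simp: span_zero)
  have lc: "continuous_on S (\<lambda>z. l (h z))" if "continuous_on S h" for S and h :: "real \<times> real \<times> 'h \<Rightarrow> real"
    by (rule continuous_on_compose2[OF lcont that]) auto
  have cG: "continuous_on C G" unfolding G_def F_def
    by (intro continuous_intros lc)
  obtain zs where zs: "zs \<in> C" "\<forall>z\<in>C. G zs \<le> G z"
    using continuous_attains_inf[OF cC _ cG] z0C by blast
  show ?thesis
  proof (intro exI conjI allI impI)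
    show "norm (snd (snd zs)) \<le> lam" using zs(1) unfolding C_def by auto
    fix f' :: 'h and b' \<rho>' :: real assume f': "norm f' \<le> lam"
    obtain p where p: "p \<in> span \<Psi>" "\<forall>s\<in>span \<Psi>. (f' - p) \<bullet> s = 0"
      using proj_from_compact[OF fd_compact[OF fin\<Psi>]] by blast
    have pp: "p \<bullet> \<psi> i = f' \<bullet> \<psi> i" if "i \<in> {1..m}" for i
    proof -
      have "\<psi> i \<in> span \<Psi>" using that unfolding \<Psi>_def by (simp add: span_base)
      thus ?thesis using p(2) by (simp add: inner_diff_left)
    qed
    have "(\<Sum>i=1..m. l (\<rho>' - y i * (p \<bullet> \<psi> i + b'))) = (\<Sum>i=1..m. l (\<rho>' - y i * (f' \<bullet> \<psi> i + b')))"
      by (rule sum.cong) (use pp in auto)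
    hence Feq: "F p b' \<rho>' = F f' b' \<rho>'" unfolding F_def by simp
    have "orthogonal p (f' - p)" using p unfolding orthogonal_def by (simp add: inner_commute)
    hence "(norm (p + (f' - p)))^2 = (norm p)^2 + (norm (f' - p))^2" by (rule norm_add_Pythagorean)
    hence "(norm p)^2 \<le> (norm f')^2" by simp
    hence np: "norm p \<le> lam" using f' power2_le_imp_le by fastforce
    have "G zs \<le> F f' b' \<rho>'"
    proof (cases "F p b' \<rho>' \<le> c0")
      case True
      hence "\<bar>\<rho>'\<bar> \<le> R \<and> \<bar>b'\<bar> \<le> R" using bound np by blast
      hence "(\<rho>', b', p) \<in> C" unfolding C_def using p(1) np by (auto simp: abs_le_iff)
      hence "G zs \<le> G (\<rho>', b', p)" using zs by blast
      thus ?thesis using Feq by (simp add: G_def)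
    next
      case False
      have "G zs \<le> G (0, 0, 0)" using zs z0C by blast
      also have "\<dots> = c0" by (simp add: G_def c0_def)
      finally show ?thesis using False Feq by simp
    qed
    thus "F (snd (snd zs)) (fst (snd zs)) (fst zs) \<le> F f' b' \<rho>'" by (simp add: G_def)
  qed
qed



lemma zono_compact:
  fixes w :: "nat \<Rightarrow> 'a::real_normed_vector"
  assumes "finite I"
  shows "compact {\<Sum>i\<in>I. g i *\<^sub>R w i | g. \<forall>i\<in>I. a i \<le> g i \<and> g i \<le> b i}"
  using assms
proof (induction I rule: finite_induct)
  case empty
  have "{\<Sum>i\<in>{}. g i *\<^sub>R w i | g. \<forall>i\<in>{}. a i \<le> g i \<and> g i \<le> b i} = {0}" by auto
  thus ?case by simp
next
  case (insert j I)
  let ?Z = "{\<Sum>i\<in>I. g i *\<^sub>R w i | g. \<forall>i\<in>I. a i \<le> g i \<and> g i \<le> b i}"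
  have eq: "{\<Sum>i\<in>insert j I. g i *\<^sub>R w i | g. \<forall>i\<in>insert j I. a i \<le> g i \<and> g i \<le> b i}
      = (\<lambda>(c, v). c *\<^sub>R w j + v) ` ({a j..b j} \<times> ?Z)" (is "?L = ?R")
  proof
    show "?L \<subseteq> ?R"
    proof
      fix x assume "x \<in> ?L"
      then obtain g where g: "x = (\<Sum>i\<in>insert j I. g i *\<^sub>R w i)" "\<forall>i\<in>insert j I. a i \<le> g i \<and> g i \<le> b i" by blast
      have "x = g j *\<^sub>R w j + (\<Sum>i\<in>I. g i *\<^sub>R w i)" using g(1) insert by simp
      moreover have "(g j, \<Sum>i\<in>I. g i *\<^sub>R w i) \<in> {a j..b j} \<times> ?Z" using g(2) by auto
      ultimately show "x \<in> ?R" by (auto intro!: image_eqI)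
    qed
  next
    show "?R \<subseteq> ?L"
    proof
      fix x assume "x \<in> ?R"
      then obtain c g where cg: "x = c *\<^sub>R w j + (\<Sum>i\<in>I. g i *\<^sub>R w i)" "a j \<le> c" "c \<le> b j"
        "\<forall>i\<in>I. a i \<le> g i \<and> g i \<le> b i" by auto
      define g' where "g' = g(j := c)"
      have "(\<Sum>i\<in>I. g' i *\<^sub>R w i) = (\<Sum>i\<in>I. g i *\<^sub>R w i)"
        by (rule sum.cong) (use insert in \<open>auto simp: g'_def\<close>)
      hence "x = (\<Sum>i\<in>insert j I. g' i *\<^sub>R w i)" using cg insert by (simp add: g'_def)
      moreover have "\<forall>i\<in>insert j I. a i \<le> g' i \<and> g' i \<le> b i" using cg by (auto simp: g'_def)
      ultimately show "x \<in> ?L" by blast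
    qed
  qed
  show ?case unfolding eq
    by (intro compact_continuous_image compact_Times compact_Icc insert.IH)
       (auto intro!: continuous_intros simp: case_prod_unfold)
qed

lemma zono_convex:
  fixes w :: "nat \<Rightarrow> 'a::real_vector"
  shows "convex {\<Sum>i\<in>I. g i *\<^sub>R w i | g. \<forall>i\<in>I. a i \<le> g i \<and> g i \<le> b i}"
  unfolding convex_def
proof (intro ballI allI impI)
  fix x z :: 'a and u v :: real
  assume x: "x \<in> {\<Sum>i\<in>I. g i *\<^sub>R w i | g. \<forall>i\<in>I. a i \<le> g i \<and> g i \<le> b i}"
     and z: "z \<in> {\<Sum>i\<in>I. g i *\<^sub>R w i | g. \<forall>i\<in>I. a i \<le> g i \<and> g i \<le> b i}"
     and uv: "0 \<le> u" "0 \<le> v" "u + v = 1"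
  obtain g1 where g1: "x = (\<Sum>i\<in>I. g1 i *\<^sub>R w i)" "\<forall>i\<in>I. a i \<le> g1 i \<and> g1 i \<le> b i" using x by blast
  obtain g2 where g2: "z = (\<Sum>i\<in>I. g2 i *\<^sub>R w i)" "\<forall>i\<in>I. a i \<le> g2 i \<and> g2 i \<le> b i" using z by blast
  define g where "g i = u * g1 i + v * g2 i" for i
  have "u *\<^sub>R x + v *\<^sub>R z = (\<Sum>i\<in>I. g i *\<^sub>R w i)"
    unfolding g1 g2 g_def by (simp add: scaleR_sum_right sum.distrib scaleR_add_left)
  moreover have "a i \<le> g i \<and> g i \<le> b i" if "i \<in> I" for i
  proof -
    have h: "a i \<le> g1 i" "g1 i \<le> b i" "a i \<le> g2 i" "g2 i \<le> b i" using g1(2) g2(2) that by auto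
    have "u * a i \<le> u * g1 i" "v * a i \<le> v * g2 i" "u * g1 i \<le> u * b i" "v * g2 i \<le> v * b i"
      using h uv by (auto intro: mult_left_mono)
    moreover have "u * a i + v * a i = a i" "u * b i + v * b i = b i" using uv by (metis distrib_right mult_1)+
    ultimately show ?thesis unfolding g_def by linarith
  qed
  ultimately show "u *\<^sub>R x + v *\<^sub>R z \<in> {\<Sum>i\<in>I. g i *\<^sub>R w i | g. \<forall>i\<in>I. a i \<le> g i \<and> g i \<le> b i}"
    by blast
qed

lemma inner_expand:
  fixes \<psi> :: "nat \<Rightarrow> 'h::real_inner"
  shows "(p1, p2, p3) \<bullet> (\<Sum>i\<in>I. g i *\<^sub>R (1::real, y i, y i *\<^sub>R \<psi> i))
    = p1 * (\<Sum>i\<in>I. g i) + p2 * (\<Sum>i\<in>I. g i * y i) + p3 \<bullet> (\<Sum>i\<in>I. (g i * y i) *\<^sub>R \<psi> i)"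
  by (simp add: inner_sum_right sum_distrib_left sum.distrib algebra_simps)



lemma kkt:
  fixes \<psi> :: "nat \<Rightarrow> 'h::real_inner" and y :: "nat \<Rightarrow> real" and l :: "real \<Rightarrow> real"
    and m :: nat and fs :: 'h and bs \<rho>s lam :: real
  defines "F \<equiv> \<lambda>f b \<rho>. -2*\<rho> + (1/real m) * (\<Sum>i=1..m. l (\<rho> - y i * (f \<bullet> \<psi> i + b)))"
  defines "u \<equiv> \<lambda>i. \<rho>s - y i * (fs \<bullet> \<psi> i + bs)"
  assumes conv: "convex_on UNIV l" and m: "real m > 0" and lam: "lam > 0"
    and fs: "norm fs \<le> lam"
    and opt: "\<forall>f' b' \<rho>'. norm f' \<le> lam \<longrightarrow> F fs bs \<rho>s \<le> F f' b' \<rho>'"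
  shows "\<exists>g. (\<forall>i\<in>{1..m}. ld l (u i) \<le> g i \<and> g i \<le> rd l (u i)) \<and> (\<Sum>i=1..m. g i) = 2 * real m
      \<and> (\<Sum>i=1..m. g i * y i) = 0
      \<and> fs \<bullet> (\<Sum>i=1..m. (g i * y i) *\<^sub>R \<psi> i) = lam * norm (\<Sum>i=1..m. (g i * y i) *\<^sub>R \<psi> i)"
proof -
  define I where "I = {1..m}"
  have finI: "finite I" by (simp add: I_def)
  have cardI: "real (card I) = real m" by (simp add: I_def)
  define a where "a i = ld l (u i)" for i
  define b where "b i = rd l (u i)" for i
  have ab: "a i \<le> b i" for i using ld_le_rd[OF conv] a_def b_def by simp
  define w where "w i = (1::real, y i, y i *\<^sub>R \<psi> i)" for i
  define Cg where "Cg g = (\<Sum>i\<in>I. (g i * y i) *\<^sub>R \<psi> i)" for g :: "nat \<Rightarrow> real"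
  define Bc where "Bc = (\<Sum>i\<in>I. (\<bar>a i\<bar> + \<bar>b i\<bar>) * \<bar>y i\<bar> * norm (\<psi> i))"
  have Bc0: "Bc \<ge> 0" unfolding Bc_def by (intro sum_nonneg) auto
  have Cb: "norm (Cg g) \<le> Bc" if g: "\<forall>i\<in>I. a i \<le> g i \<and> g i \<le> b i" for g
  proof -
    have "norm (Cg g) \<le> (\<Sum>i\<in>I. norm ((g i * y i) *\<^sub>R \<psi> i))" unfolding Cg_def by (rule norm_sum)
    also have "\<dots> \<le> Bc" unfolding Bc_def
    proof (rule sum_mono)
      fix i assume i: "i \<in> I"
      have "\<bar>g i\<bar> \<le> \<bar>a i\<bar> + \<bar>b i\<bar>" using g i by auto
      hence "\<bar>g i\<bar> * (\<bar>y i\<bar> * norm (\<psi> i)) \<le> (\<bar>a i\<bar> + \<bar>b i\<bar>) * (\<bar>y i\<bar> * norm (\<psi> i))"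
        by (intro mult_right_mono) auto
      thus "norm ((g i * y i) *\<^sub>R \<psi> i) \<le> (\<bar>a i\<bar> + \<bar>b i\<bar>) * \<bar>y i\<bar> * norm (\<psi> i)"
        by (simp add: abs_mult mult.assoc)
    qed
    finally show ?thesis .
  qed
  define S where "S = (if norm fs = lam then Bc / lam else 0)"
  have S0: "S \<ge> 0" unfolding S_def using Bc0 lam by auto
  define Z where "Z = {\<Sum>i\<in>I. g i *\<^sub>R w i | g. \<forall>i\<in>I. a i \<le> g i \<and> g i \<le> b i}"
  define L where "L = (\<lambda>s. (-(2 * real m), 0::real, -(s *\<^sub>R fs))) ` {0..S}"
  define K where "K = {x + z | x z. x \<in> Z \<and> z \<in> L}"
  have cZ: "compact Z" unfolding Z_def by (rule zono_compact[OF finI])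
  have cL: "compact L" unfolding L_def
    by (intro compact_continuous_image compact_Icc) (auto intro!: continuous_intros)
  have cK: "compact K" unfolding K_def using compact_sums[OF cZ cL] .
  have vZ: "convex Z" unfolding Z_def by (rule zono_convex)
  have vL: "convex L" unfolding convex_def
  proof (intro ballI allI impI)
    fix x z :: "real \<times> real \<times> 'h" and u v :: real
    assume x: "x \<in> L" and z: "z \<in> L" and uv: "0 \<le> u" "0 \<le> v" "u + v = 1"
    obtain s1 where s1: "s1 \<in> {0..S}" "x = (-(2 * real m), 0, -(s1 *\<^sub>R fs))" using x L_def by auto
    obtain s2 where s2: "s2 \<in> {0..S}" "z = (-(2 * real m), 0, -(s2 *\<^sub>R fs))" using z L_def by auto
    have "u * s1 + v * s2 \<le> u * S + v * S" using s1 s2 uv by (auto intro!: add_mono mult_left_mono)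
    hence r: "u * s1 + v * s2 \<in> {0..S}" using s1 s2 uv by (auto simp: distrib_right[symmetric])
    have "u *\<^sub>R x + v *\<^sub>R z = (-(2 * real m), 0, -((u * s1 + v * s2) *\<^sub>R fs))"
      using s1 s2 uv by (simp add: algebra_simps distrib_right[symmetric] scaleR_add_left)
    thus "u *\<^sub>R x + v *\<^sub>R z \<in> L" unfolding L_def using r by blast
  qed
  have vK: "convex K"
  proof -
    have "K = (\<Union>x\<in>Z. \<Union>z\<in>L. {x + z})" unfolding K_def by blast
    thus ?thesis using convex_sums[OF vZ vL] by simp
  qed
  have memK: "(\<Sum>i\<in>I. g i *\<^sub>R w i) + (-(2 * real m), 0, -(s *\<^sub>R fs)) \<in> K"
    if "\<forall>i\<in>I. a i \<le> g i \<and> g i \<le> b i" "0 \<le> s" "s \<le> S" for g s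
  proof -
    have "(\<Sum>i\<in>I. g i *\<^sub>R w i) \<in> Z" unfolding Z_def using that by blast
    moreover have "(-(2 * real m), 0::real, -(s *\<^sub>R fs)) \<in> L" unfolding L_def using that by auto
    ultimately show ?thesis unfolding K_def by blast
  qed
  have nK: "K \<noteq> {}" using memK[of a 0] ab S0 by auto
  show ?thesis
  proof (cases "0 \<in> K")
    case True
    then obtain x z where xz: "x \<in> Z" "z \<in> L" "x + z = 0" unfolding K_def by auto
    obtain g where g: "\<forall>i\<in>I. a i \<le> g i \<and> g i \<le> b i" "x = (\<Sum>i\<in>I. g i *\<^sub>R w i)" using xz(1) Z_def by auto
    obtain s where s: "0 \<le> s" "s \<le> S" "z = (-(2 * real m), 0, -(s *\<^sub>R fs))" using xz(2) L_def by auto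
    have eq: "(\<Sum>i\<in>I. g i *\<^sub>R w i) + (-(2 * real m), 0::real, -(s *\<^sub>R fs)) = 0" using xz g s by simp
    have e1: "(\<Sum>i\<in>I. g i) = 2 * real m" using arg_cong[OF eq, of fst] by (simp add: fst_sum w_def)
    have e2: "(\<Sum>i\<in>I. g i * y i) = 0" using arg_cong[OF eq, of "\<lambda>z. fst (snd z)"]
      by (simp add: fst_sum snd_sum w_def)
    have e3: "Cg g = s *\<^sub>R fs" using arg_cong[OF eq, of "\<lambda>z. snd (snd z)"]
      by (simp add: snd_sum w_def Cg_def)
    have e4: "fs \<bullet> Cg g = lam * norm (Cg g)"
    proof (cases "norm fs = lam")
      case True
      have "fs \<bullet> Cg g = s * (norm fs)^2" by (simp add: e3 power2_norm_eq_inner)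
      also have "\<dots> = lam * norm (Cg g)" using True s(1) by (simp add: e3 power2_eq_square)
      finally show ?thesis .
    next
      case False
      hence "s = 0" using s S_def by simp
      thus ?thesis by (simp add: e3)
    qed
    show ?thesis
      by (intro exI[of _ g] conjI) (use g e1 e2 e4 in \<open>auto simp: I_def a_def b_def Cg_def\<close>)
  next
    case False
    obtain p where p: "p \<noteq> 0" "\<forall>q\<in>K. p \<bullet> p \<le> p \<bullet> q" using sep0[OF cK vK nK False] by blast
    obtain p1 p2 p3 where pp: "p = (p1, p2, p3)" by (cases p) auto
    define P where "P = p \<bullet> p"
    have P0: "P > 0" using p(1) by (simp add: P_def)
    have key: "P + s * (p3 \<bullet> fs) \<le> p1 * ((\<Sum>i\<in>I. g i) - 2 * real m) + p2 * (\<Sum>i\<in>I. g i * y i) + p3 \<bullet> Cg g"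
      if "\<forall>i\<in>I. a i \<le> g i \<and> g i \<le> b i" "0 \<le> s" "s \<le> S" for g s
    proof -
      have "P \<le> p \<bullet> ((\<Sum>i\<in>I. g i *\<^sub>R w i) + (-(2 * real m), 0, -(s *\<^sub>R fs)))"
        using p(2) memK[OF that] P_def by blast
      also have "\<dots> = p1 * (\<Sum>i\<in>I. g i) + p2 * (\<Sum>i\<in>I. g i * y i) + p3 \<bullet> Cg g - p1 * (2 * real m) - s * (p3 \<bullet> fs)"
        unfolding pp w_def Cg_def inner_add_right inner_expand by (simp add: algebra_simps)
      finally show ?thesis by (simp add: algebra_simps)
    qed
    define \<delta> where "\<delta> = P / (2 * (lam^2 * S + 1))"
    have lS: "lam^2 * S \<ge> 0" using S0 by simp
    have \<delta>0: "\<delta> > 0" unfolding \<delta>_def using P0 lS by simp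
    have \<delta>b: "\<delta> * (lam^2 * S) \<le> P / 2"
    proof -
      have "\<delta> * (lam^2 * S) \<le> \<delta> * (lam^2 * S + 1)" using \<delta>0 by simp
      also have "\<dots> = P / 2" unfolding \<delta>_def using lS by (simp add: field_simps)
      finally show ?thesis .
    qed
    define M0 where "M0 = max 0 (p3 \<bullet> fs)"
    define \<kappa> where "\<kappa> = (if norm fs = lam then M0 / lam^2 + \<delta> else 0)"
    have \<kappa>0: "\<kappa> \<ge> 0" unfolding \<kappa>_def M0_def using \<delta>0 by auto
    define d\<rho> where "d\<rho> = - p1"
    define db where "db = p2"
    define df where "df = p3 - \<kappa> *\<^sub>R fs"
    define du where "du i = d\<rho> - y i * (df \<bullet> \<psi> i + db)" for i
    define gs where "gs i = (if 0 \<le> du i then b i else a i)" for i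
    have gsbox: "\<forall>i\<in>I. a i \<le> gs i \<and> gs i \<le> b i" using ab by (simp add: gs_def)
    have T: "-2 * d\<rho> + (1 / real m) * (\<Sum>i\<in>I. gs i * du i) \<le> - P / (2 * real m)"
    proof -
      define X where "X = p1 * ((\<Sum>i\<in>I. gs i) - 2 * real m) + p2 * (\<Sum>i\<in>I. gs i * y i) + p3 \<bullet> Cg gs"
      define Y where "Y = \<kappa> * (fs \<bullet> Cg gs)"
      have sum_du: "(\<Sum>i\<in>I. gs i * du i) = d\<rho> * (\<Sum>i\<in>I. gs i) - df \<bullet> Cg gs - db * (\<Sum>i\<in>I. gs i * y i)"
        unfolding du_def Cg_def
        by (simp add: inner_sum_right sum_subtractf sum_distrib_left sum.distrib algebra_simps)
      have dfC: "df \<bullet> Cg gs = p3 \<bullet> Cg gs - \<kappa> * (fs \<bullet> Cg gs)" by (simp add: df_def inner_diff_left)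
      have eq: "-2 * d\<rho> + (1 / real m) * (\<Sum>i\<in>I. gs i * du i) = (Y - X) / real m"
        using m unfolding sum_du dfC X_def Y_def d\<rho>_def db_def by (simp add: field_simps)
      have "Y - X \<le> - P / 2"
      proof (cases "norm fs = lam")
        case True
        define s0 where "s0 = (if p3 \<bullet> fs > 0 then S else 0)"
        have "P + s0 * (p3 \<bullet> fs) \<le> X" unfolding X_def using key[OF gsbox, of s0] S0 by (auto simp: s0_def)
        moreover have "s0 * (p3 \<bullet> fs) = S * M0" by (auto simp: s0_def M0_def)
        ultimately have X1: "P + S * M0 \<le> X" by simp
        have "fs \<bullet> Cg gs \<le> norm fs * norm (Cg gs)" by (rule norm_cauchy_schwarz)
        also have "\<dots> \<le> lam * Bc" using True Cb[OF gsbox] lam by (simp add: mult_left_mono)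
        also have "\<dots> = lam^2 * S" using True lam by (simp add: S_def power2_eq_square)
        finally have fC: "fs \<bullet> Cg gs \<le> lam^2 * S" .
        have "Y \<le> \<kappa> * (lam^2 * S)" unfolding Y_def using fC \<kappa>0 by (rule mult_left_mono)
        also have "\<dots> = M0 * S + \<delta> * (lam^2 * S)" using True lam by (simp add: \<kappa>_def field_simps)
        finally show ?thesis using X1 \<delta>b by (simp add: algebra_simps)
      next
        case False
        have "P + 0 * (p3 \<bullet> fs) \<le> X" unfolding X_def using key[OF gsbox, of 0] S0 by auto
        moreover have "Y = 0" using False by (simp add: Y_def \<kappa>_def)
        ultimately show ?thesis using P0 by simp
      qed
      hence "(Y - X) / real m \<le> (- P / 2) / real m" using m by (intro divide_right_mono) auto
      also have "\<dots> = - P / (2 * real m)" by simp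
      finally show ?thesis using eq by simp
    qed
    define \<epsilon> where "\<epsilon> = P / (4 * real m)"
    have \<epsilon>0: "\<epsilon> > 0" using P0 m by (simp add: \<epsilon>_def)
    have ev1: "eventually (\<lambda>t. \<forall>i\<in>I. l (u i + t * du i) - l (u i) \<le> t * (gs i * du i + \<epsilon>)) (at_right 0)"
    proof (rule eventually_ball_finite[OF finI], intro ballI)
      fix i assume "i \<in> I"
      show "eventually (\<lambda>t. l (u i + t * du i) - l (u i) \<le> t * (gs i * du i + \<epsilon>)) (at_right 0)"
        using descent_1d[OF conv \<epsilon>0, of "u i" "du i"] by (cases "0 \<le> du i") (simp_all add: gs_def a_def b_def)
    qed
    have ev2: "eventually (\<lambda>t. norm (fs + t *\<^sub>R df) \<le> lam) (at_right 0)"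
    proof (cases "norm fs = lam")
      case False
      hence lt: "norm fs < lam" using fs by simp
      show ?thesis unfolding eventually_at_right_field
      proof (intro exI[of _ "(lam - norm fs) / (norm df + 1)"] conjI allI impI)
        show "0 < (lam - norm fs) / (norm df + 1)" using lt by (intro divide_pos_pos) (auto intro: add_nonneg_pos)
        fix t :: real assume t: "0 < t" "t < (lam - norm fs) / (norm df + 1)"
        have "t * (norm df + 1) < lam - norm fs" using t(2) by (simp add: field_simps add_pos_nonneg)
        hence "t * norm df \<le> lam - norm fs" by (simp add: algebra_simps) (smt (verit) t(1))
        hence "norm fs + norm (t *\<^sub>R df) \<le> lam" using t(1) by simp
        thus "norm (fs + t *\<^sub>R df) \<le> lam" using norm_triangle_ineq[of fs "t *\<^sub>R df"] by linarith
      qed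
    next
      case True
      define c where "c = fs \<bullet> df"
      have "c = p3 \<bullet> fs - \<kappa> * (norm fs)^2" by (simp add: c_def df_def inner_diff_right power2_norm_eq_inner inner_commute)
      also have "\<dots> = p3 \<bullet> fs - M0 - \<delta> * lam^2" using True lam by (simp add: \<kappa>_def field_simps)
      also have "\<dots> \<le> - \<delta> * lam^2" by (simp add: M0_def)
      finally have cle: "c \<le> - \<delta> * lam^2" .
      have "\<delta> * lam^2 > 0" using \<delta>0 lam by simp
      hence "c < 0" using cle by linarith
      show ?thesis unfolding eventually_at_right_field
      proof (intro exI[of _ "- 2 * c / (df \<bullet> df + 1)"] conjI allI impI)
        have dd: "df \<bullet> df + 1 > 0" using inner_ge_zero[of df] by linarith
        show "0 < - 2 * c / (df \<bullet> df + 1)" using \<open>c < 0\<close> dd by (intro divide_pos_pos) auto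
        fix t :: real assume t: "0 < t" "t < - 2 * c / (df \<bullet> df + 1)"
        have "t * (df \<bullet> df + 1) < - 2 * c" using t(2) dd by (simp add: field_simps)
        hence "t * (df \<bullet> df) < - 2 * c" using t(1) by (simp add: algebra_simps)
        hence "2 * c + t * (df \<bullet> df) < 0" by simp
        hence neg: "t * (2 * c + t * (df \<bullet> df)) < 0" using t(1) by (simp add: mult_pos_neg)
        have "(norm (fs + t *\<^sub>R df))^2 = fs \<bullet> fs + t * (2 * c + t * (df \<bullet> df))"
          by (simp add: power2_norm_eq_inner inner_add_left inner_add_right c_def inner_commute algebra_simps)
        also have "\<dots> \<le> lam^2" using neg True by (simp add: power2_norm_eq_inner[symmetric])
        finally show "norm (fs + t *\<^sub>R df) \<le> lam" using lam power2_le_imp_le by fastforce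
      qed
    qed
    obtain t where t: "0 < t" "\<forall>i\<in>I. l (u i + t * du i) - l (u i) \<le> t * (gs i * du i + \<epsilon>)"
      "norm (fs + t *\<^sub>R df) \<le> lam"
    proof -
      from eventually_conj[OF ev1 ev2] obtain B where B: "B > 0"
        "\<forall>t>0. t < B \<longrightarrow> (\<forall>i\<in>I. l (u i + t * du i) - l (u i) \<le> t * (gs i * du i + \<epsilon>)) \<and> norm (fs + t *\<^sub>R df) \<le> lam"
        unfolding eventually_at_right_field by auto
      have hb: "0 < B / 2" "B / 2 < B" using B(1) by auto
      note H = B(2)[rule_format, OF hb]
      show ?thesis using that[OF hb(1)] H by blast
    qed
    have un: "(\<rho>s + t * d\<rho>) - y i * ((fs + t *\<^sub>R df) \<bullet> \<psi> i + (bs + t * db)) = u i + t * du i" for i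
      by (simp add: u_def du_def inner_add_left algebra_simps)
    have "F (fs + t *\<^sub>R df) (bs + t * db) (\<rho>s + t * d\<rho>) - F fs bs \<rho>s
        = -2 * t * d\<rho> + (1 / real m) * (\<Sum>i\<in>I. l (u i + t * du i) - l (u i))"
      unfolding F_def I_def un by (simp add: u_def sum_subtractf algebra_simps)
    also have "\<dots> \<le> -2 * t * d\<rho> + (1 / real m) * (\<Sum>i\<in>I. t * (gs i * du i + \<epsilon>))"
      using t(2) m by (intro add_left_mono mult_left_mono sum_mono) auto
    also have "\<dots> = t * (-2 * d\<rho> + (1 / real m) * (\<Sum>i\<in>I. gs i * du i)) + t * \<epsilon> * (real (card I) / real m)"
      by (simp add: sum.distrib sum_distrib_left algebra_simps)
    also have "\<dots> = t * (-2 * d\<rho> + (1 / real m) * (\<Sum>i\<in>I. gs i * du i)) + t * \<epsilon>"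
      using cardI m by simp
    also have "\<dots> \<le> t * (- P / (2 * real m)) + t * \<epsilon>"
      using mult_left_mono[OF T, of t] t(1) by (intro add_right_mono) auto
    also have "\<dots> < 0" using t(1) P0 m by (simp add: \<epsilon>_def field_simps)
    finally have "F (fs + t *\<^sub>R df) (bs + t * db) (\<rho>s + t * d\<rho>) < F fs bs \<rho>s" by simp
    moreover have "F fs bs \<rho>s \<le> F (fs + t *\<^sub>R df) (bs + t * db) (\<rho>s + t * d\<rho>)" using opt t(3) by blast
    ultimately show ?thesis by simp
  qed
qed



lemma class_bound:
  assumes "ereal (1 / real m) * (\<Sum>i\<in>M. conj_fun l (real m * \<alpha> i)) \<le> ereal c" "real m > 0"
  shows "(1 / real m) * (\<Sum>i\<in>M. real m * \<alpha> i * u i - l (u i)) \<le> c"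
proof -
  have "(\<Sum>i\<in>M. ereal (real m * \<alpha> i * u i - l (u i))) \<le> (\<Sum>i\<in>M. conj_fun l (real m * \<alpha> i))"
    by (rule sum_mono) (rule fenchel_young)
  hence "ereal (\<Sum>i\<in>M. real m * \<alpha> i * u i - l (u i)) \<le> (\<Sum>i\<in>M. conj_fun l (real m * \<alpha> i))" by simp
  hence "ereal (1 / real m) * ereal (\<Sum>i\<in>M. real m * \<alpha> i * u i - l (u i))
      \<le> ereal (1 / real m) * (\<Sum>i\<in>M. conj_fun l (real m * \<alpha> i))"
    using assms(2) by (intro ereal_mult_left_mono) auto
  also have "\<dots> \<le> ereal c" by (rule assms(1))
  finally show ?thesis by simp
qed

lemma class_eq:
  assumes "\<forall>i\<in>M. g i \<in> subdiff l (u i)" "real m > 0"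
  shows "ereal (1 / real m) * (\<Sum>i\<in>M. conj_fun l (real m * (g i / real m)))
     = ereal ((1 / real m) * (\<Sum>i\<in>M. g i * u i - l (u i)))"
proof -
  have "(\<Sum>i\<in>M. conj_fun l (real m * (g i / real m))) = (\<Sum>i\<in>M. ereal (g i * u i - l (u i)))"
    by (rule sum.cong) (use assms in \<open>auto simp: conj_subgrad\<close>)
  thus ?thesis by simp
qed

theorem lemma1:
  fixes X :: "'a::metric_space set"
    and k :: "'a \<Rightarrow> 'a \<Rightarrow> real"
    and \<phi> :: "'a \<Rightarrow> 'h::{real_inner,complete_space}"
    and K :: real
    and l :: "real \<Rightarrow> real"
    and m1 :: nat and x :: "nat \<Rightarrow> 'a" and y :: "nat \<Rightarrow> real"
    and lam :: real
  defines "Mp \<equiv> {i\<in>{1..m1}. y i = 1}"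
    and "Mn \<equiv> {i\<in>{1..m1}. y i = -1}"
  assumes "compact X"
    and "continuous_on (X \<times> X) (\<lambda>(u, v). k u v)"
    and "is_rkhs_feature X k \<phi>"
    and "universal_kernel X \<phi>"
    and "\<forall>u\<in>X. sqrt (k u u) \<le> K"
    and "mono l" and "convex_on UNIV l" and "\<forall>z. l z \<ge> 0"
    and "\<forall>M>0. \<exists>z0. \<forall>z\<ge>z0. \<forall>g\<in>subdiff l z. g \<ge> M"
    and "\<forall>i\<in>{1..m1}. x i \<in> X \<and> (y i = 1 \<or> y i = -1)"
    and "Mp \<noteq> {}" and "Mn \<noteq> {}"
    and "lam > 0"
  shows "\<exists>f b \<rho>. (norm f)\<^sup>2 \<le> lam\<^sup>2 \<and>
           (\<forall>f' b' \<rho>'. (norm f')\<^sup>2 \<le> lam\<^sup>2 \<longrightarrow>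
               primal_obj l m1 \<phi> x y f b \<rho> \<le> primal_obj l m1 \<phi> x y f' b' \<rho>') \<and>
           ereal (primal_obj l m1 \<phi> x y f b \<rho>) =
             - (INF t \<in> {cp + cn + lam * norm (fp - fn) | cp cn fp fn.
                    fp \<in> uset l m1 \<phi> x Mp cp \<and> fn \<in> uset l m1 \<phi> x Mn cn}. ereal t)"
proof -
  note mono = assms(8) and conv = assms(9) and nn = assms(10) and sup = assms(11)
    and xy = assms(12) and lam = assms(15)
  define \<psi> where "\<psi> i = \<phi> (x i)" for i
  define F where "F \<equiv> \<lambda>f b \<rho>. -2*\<rho> + (1/real m1) * (\<Sum>i=1..m1. l (\<rho> - y i * (f \<bullet> \<psi> i + b)))"
  have Fp: "primal_obj l m1 \<phi> x y f b \<rho> = F f b \<rho>" for f b \<rho>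
    by (simp add: primal_obj_def F_def \<psi>_def)
  obtain ip where ip: "ip \<in> {1..m1}" "y ip = 1" using assms(13) Mp_def by auto
  obtain jn where jn: "jn \<in> {1..m1}" "y jn = -1" using assms(14) Mn_def by auto
  have m: "real m1 > 0" using ip by auto
  have gr: "\<exists>z0. \<forall>u. M * (u - z0) \<le> l u" if "M > 0" for M
    using growth[OF conv nn sup that] .
  have nsq: "(norm f)\<^sup>2 \<le> lam\<^sup>2 \<longleftrightarrow> norm f \<le> lam" for f :: 'h
    using lam by (auto intro: power_mono power2_le_imp_le)
  obtain fs bs \<rho>s where fs: "norm fs \<le> lam" and opt: "\<forall>f' b' \<rho>'. norm f' \<le> lam \<longrightarrow> F fs bs \<rho>s \<le> F f' b' \<rho>'"
    using primal_exists[OF conv nn gr ip jn lam, where \<psi>=\<psi>] unfolding F_def by blast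
  define u where "u i = \<rho>s - y i * (fs \<bullet> \<psi> i + bs)" for i
  obtain g where g: "\<forall>i\<in>{1..m1}. ld l (u i) \<le> g i \<and> g i \<le> rd l (u i)"
      "(\<Sum>i=1..m1. g i) = 2 * real m1" "(\<Sum>i=1..m1. g i * y i) = 0"
      "fs \<bullet> (\<Sum>i=1..m1. (g i * y i) *\<^sub>R \<psi> i) = lam * norm (\<Sum>i=1..m1. (g i * y i) *\<^sub>R \<psi> i)"
    using kkt[OF conv m lam fs, where bs=bs and \<rho>s=\<rho>s and y=y and \<psi>=\<psi>] opt unfolding F_def u_def by blast
  have gsub: "\<forall>i\<in>{1..m1}. g i \<in> subdiff l (u i)" using g(1) subgrad_ld_rd[OF conv] by blast
  have gnn: "\<forall>i\<in>{1..m1}. 0 \<le> g i" using gsub subgrad_nonneg[OF mono] by blast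
  have Iu: "{1..m1} = Mp \<union> Mn" using xy unfolding Mp_def Mn_def by auto
  have Id: "Mp \<inter> Mn = {}" unfolding Mp_def Mn_def by auto
  have finp: "finite Mp" "finite Mn" unfolding Mp_def Mn_def by auto
  have split: "(\<Sum>i=1..m1. h i) = (\<Sum>i\<in>Mp. h i) + (\<Sum>i\<in>Mn. h i)" for h :: "nat \<Rightarrow> 'b::comm_monoid_add"
    unfolding Iu by (rule sum.union_disjoint[OF finp Id])
  have yp: "y i = 1" if "i \<in> Mp" for i using that Mp_def by auto
  have yn: "y i = -1" if "i \<in> Mn" for i using that Mn_def by auto
  define D where "D = {cp + cn + lam * norm (fp - fn) | cp cn fp fn.
                    fp \<in> uset l m1 \<phi> x Mp cp \<and> fn \<in> uset l m1 \<phi> x Mn cn}"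
  define Fs where "Fs = F fs bs \<rho>s"
  have Fs_eq: "- Fs = 2 * \<rho>s - (1 / real m1) * (\<Sum>i=1..m1. l (u i))"
    by (simp add: Fs_def F_def u_def)
  have weak: "- Fs \<le> t" if "t \<in> D" for t
  proof -
    obtain cp cn fp fn where t: "t = cp + cn + lam * norm (fp - fn)"
      and fp: "fp \<in> uset l m1 \<phi> x Mp cp" and fn: "fn \<in> uset l m1 \<phi> x Mn cn"
      using \<open>t \<in> D\<close> D_def by blast
    obtain \<alpha> where \<alpha>: "fp = (\<Sum>i\<in>Mp. \<alpha> i *\<^sub>R \<psi> i)" "sum \<alpha> Mp = 1"
      "ereal (1 / real m1) * (\<Sum>i\<in>Mp. conj_fun l (real m1 * \<alpha> i)) \<le> ereal cp"
      using fp unfolding uset_def \<psi>_def by blast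
    obtain \<beta> where \<beta>: "fn = (\<Sum>i\<in>Mn. \<beta> i *\<^sub>R \<psi> i)" "sum \<beta> Mn = 1"
      "ereal (1 / real m1) * (\<Sum>i\<in>Mn. conj_fun l (real m1 * \<beta> i)) \<le> ereal cn"
      using fn unfolding uset_def \<psi>_def by blast
    have bp: "(1 / real m1) * (\<Sum>i\<in>Mp. real m1 * \<alpha> i * u i - l (u i)) \<le> cp"
      by (rule class_bound[OF \<alpha>(3) m])
    have bn: "(1 / real m1) * (\<Sum>i\<in>Mn. real m1 * \<beta> i * u i - l (u i)) \<le> cn"
      by (rule class_bound[OF \<beta>(3) m])
    have sp: "(\<Sum>i\<in>Mp. \<alpha> i * u i) = \<rho>s - fs \<bullet> fp - bs"
    proof -
      have "(\<Sum>i\<in>Mp. \<alpha> i * u i) = (\<Sum>i\<in>Mp. \<alpha> i * \<rho>s - \<alpha> i * (fs \<bullet> \<psi> i) - \<alpha> i * bs)"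
        by (rule sum.cong) (auto simp: u_def yp algebra_simps)
      also have "\<dots> = \<rho>s - fs \<bullet> fp - bs"
        using \<alpha>(2) by (simp add: \<alpha>(1) sum_subtractf inner_sum_right sum_distrib_right[symmetric])
      finally show ?thesis .
    qed
    have sn: "(\<Sum>i\<in>Mn. \<beta> i * u i) = \<rho>s + fs \<bullet> fn + bs"
    proof -
      have "(\<Sum>i\<in>Mn. \<beta> i * u i) = (\<Sum>i\<in>Mn. \<beta> i * \<rho>s + \<beta> i * (fs \<bullet> \<psi> i) + \<beta> i * bs)"
        by (rule sum.cong) (auto simp: u_def yn algebra_simps)
      also have "\<dots> = \<rho>s + fs \<bullet> fn + bs"
        using \<beta>(2) by (simp add: \<beta>(1) sum.distrib inner_sum_right sum_distrib_right[symmetric])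
      finally show ?thesis .
    qed
    have ep: "(1 / real m1) * (\<Sum>i\<in>Mp. real m1 * \<alpha> i * u i - l (u i))
        = (\<Sum>i\<in>Mp. \<alpha> i * u i) - (1 / real m1) * (\<Sum>i\<in>Mp. l (u i))"
      using m by (simp add: sum_subtractf sum_distrib_left[symmetric] field_simps)
    have en: "(1 / real m1) * (\<Sum>i\<in>Mn. real m1 * \<beta> i * u i - l (u i))
        = (\<Sum>i\<in>Mn. \<beta> i * u i) - (1 / real m1) * (\<Sum>i\<in>Mn. l (u i))"
      using m by (simp add: sum_subtractf sum_distrib_left[symmetric] field_simps)
    have "- Fs = (\<rho>s - fs \<bullet> fp - bs) + (\<rho>s + fs \<bullet> fn + bs)
        - (1 / real m1) * (\<Sum>i\<in>Mp. l (u i)) - (1 / real m1) * (\<Sum>i\<in>Mn. l (u i)) + fs \<bullet> (fp - fn)"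
      unfolding Fs_eq split[of "\<lambda>i. l (u i)"] by (simp add: inner_diff_right algebra_simps)
    also have "\<dots> \<le> cp + cn + fs \<bullet> (fp - fn)" using bp bn ep en sp sn by linarith
    also have "fs \<bullet> (fp - fn) \<le> lam * norm (fp - fn)"
    proof -
      have "fs \<bullet> (fp - fn) \<le> norm fs * norm (fp - fn)" by (rule norm_cauchy_schwarz)
      also have "\<dots> \<le> lam * norm (fp - fn)" using fs by (simp add: mult_right_mono)
      finally show ?thesis .
    qed
    finally show ?thesis using t by simp
  qed
  define \<alpha> where "\<alpha> i = g i / real m1" for i
  define C where "C = (\<Sum>i=1..m1. (g i * y i) *\<^sub>R \<psi> i)"
  define cp where "cp = (1 / real m1) * (\<Sum>i\<in>Mp. g i * u i - l (u i))"
  define cn where "cn = (1 / real m1) * (\<Sum>i\<in>Mn. g i * u i - l (u i))"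
  define fp where "fp = (\<Sum>i\<in>Mp. \<alpha> i *\<^sub>R \<psi> i)"
  define fn where "fn = (\<Sum>i\<in>Mn. \<alpha> i *\<^sub>R \<psi> i)"
  have gp: "(\<Sum>i\<in>Mp. g i) = real m1" and gn: "(\<Sum>i\<in>Mn. g i) = real m1"
  proof -
    have "(\<Sum>i\<in>Mp. g i) + (\<Sum>i\<in>Mn. g i) = 2 * real m1" using g(2) split[of g] by simp
    moreover have "(\<Sum>i\<in>Mp. g i * y i) + (\<Sum>i\<in>Mn. g i * y i) = 0" using g(3) split[of "\<lambda>i. g i * y i"] by simp
    moreover have "(\<Sum>i\<in>Mp. g i * y i) = (\<Sum>i\<in>Mp. g i)" by (rule sum.cong) (auto simp: yp)
    moreover have "(\<Sum>i\<in>Mn. g i * y i) = - (\<Sum>i\<in>Mn. g i)" by (simp add: yn sum_negf[symmetric])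
    ultimately show "(\<Sum>i\<in>Mp. g i) = real m1" "(\<Sum>i\<in>Mn. g i) = real m1" by linarith+
  qed
  have subp: "\<forall>i\<in>Mp. g i \<in> subdiff l (u i)" and subn: "\<forall>i\<in>Mn. g i \<in> subdiff l (u i)"
    using gsub Iu by auto
  have fpU: "fp \<in> uset l m1 \<phi> x Mp cp"
  proof -
    have "sum \<alpha> Mp = 1" using gp m by (simp add: \<alpha>_def sum_divide_distrib[symmetric])
    moreover have "\<forall>i\<in>Mp. \<alpha> i \<ge> 0" using gnn Iu m by (auto simp: \<alpha>_def)
    moreover have "ereal (1 / real m1) * (\<Sum>i\<in>Mp. conj_fun l (real m1 * \<alpha> i)) \<le> ereal cp"
      unfolding \<alpha>_def cp_def class_eq[OF subp m] by simp
    ultimately show ?thesis unfolding uset_def fp_def \<psi>_def by blast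
  qed
  have fnU: "fn \<in> uset l m1 \<phi> x Mn cn"
  proof -
    have "sum \<alpha> Mn = 1" using gn m by (simp add: \<alpha>_def sum_divide_distrib[symmetric])
    moreover have "\<forall>i\<in>Mn. \<alpha> i \<ge> 0" using gnn Iu m by (auto simp: \<alpha>_def)
    moreover have "ereal (1 / real m1) * (\<Sum>i\<in>Mn. conj_fun l (real m1 * \<alpha> i)) \<le> ereal cn"
      unfolding \<alpha>_def cn_def class_eq[OF subn m] by simp
    ultimately show ?thesis unfolding uset_def fn_def \<psi>_def by blast
  qed
  have fpn: "fp - fn = (1 / real m1) *\<^sub>R C"
  proof -
    have "C = (\<Sum>i\<in>Mp. (g i * y i) *\<^sub>R \<psi> i) + (\<Sum>i\<in>Mn. (g i * y i) *\<^sub>R \<psi> i)"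
      unfolding C_def by (rule split)
    also have "\<dots> = (\<Sum>i\<in>Mp. g i *\<^sub>R \<psi> i) - (\<Sum>i\<in>Mn. g i *\<^sub>R \<psi> i)"
      by (simp add: yp yn sum_negf[symmetric] cong: sum.cong)
    finally have "C = (\<Sum>i\<in>Mp. g i *\<^sub>R \<psi> i) - (\<Sum>i\<in>Mn. g i *\<^sub>R \<psi> i)" .
    moreover have sc: "(\<Sum>i\<in>M. \<alpha> i *\<^sub>R \<psi> i) = (1 / real m1) *\<^sub>R (\<Sum>i\<in>M. g i *\<^sub>R \<psi> i)" for M
      unfolding scaleR_sum_right by (rule sum.cong) (simp_all add: \<alpha>_def)
    ultimately show ?thesis unfolding fp_def fn_def sc by (simp add: scaleR_diff_right)
  qed
  have sgu: "(\<Sum>i=1..m1. g i * u i) = 2 * real m1 * \<rho>s - fs \<bullet> C"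
  proof -
    have "(\<Sum>i=1..m1. g i * u i) = (\<Sum>i=1..m1. g i * \<rho>s - (g i * y i) * (fs \<bullet> \<psi> i) - (g i * y i) * bs)"
      by (rule sum.cong) (auto simp: u_def algebra_simps)
    also have "\<dots> = \<rho>s * (\<Sum>i=1..m1. g i) - fs \<bullet> C - bs * (\<Sum>i=1..m1. g i * y i)"
      by (simp add: C_def sum_subtractf sum.distrib inner_sum_right sum_distrib_left sum_distrib_right algebra_simps)
    finally show ?thesis using g(2,3) by simp
  qed
  have t0: "cp + cn + lam * norm (fp - fn) = - Fs"
  proof -
    have "cp + cn = (1 / real m1) * ((\<Sum>i=1..m1. g i * u i) - (\<Sum>i=1..m1. l (u i)))"
      unfolding cp_def cn_def split[of "\<lambda>i. g i * u i"] split[of "\<lambda>i. l (u i)"]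
      by (simp add: sum_subtractf algebra_simps)
    also have "\<dots> = 2 * \<rho>s - (fs \<bullet> C) / real m1 - (1 / real m1) * (\<Sum>i=1..m1. l (u i))"
      unfolding sgu using m by (simp add: field_simps)
    finally have cc: "cp + cn = 2 * \<rho>s - (fs \<bullet> C) / real m1 - (1 / real m1) * (\<Sum>i=1..m1. l (u i))" .
    have "lam * norm (fp - fn) = (lam * norm C) / real m1" using m by (simp add: fpn)
    also have "\<dots> = (fs \<bullet> C) / real m1" using g(4) by (simp add: C_def)
    finally show ?thesis using cc Fs_eq by simp
  qed
  have t0D: "- Fs \<in> D" unfolding D_def using t0 fpU fnU by (metis (mono_tags, lifting) mem_Collect_eq)
  have INFeq: "(INF t\<in>D. ereal t) = ereal (- Fs)"
  proof (rule antisym)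
    show "(INF t\<in>D. ereal t) \<le> ereal (- Fs)" using t0D by (rule INF_lower)
    show "ereal (- Fs) \<le> (INF t\<in>D. ereal t)" using weak by (intro INF_greatest) simp
  qed
  show ?thesis
  proof (intro exI conjI allI impI)
    show "(norm fs)\<^sup>2 \<le> lam\<^sup>2" using fs nsq by blast
    fix f' :: 'h and b' \<rho>' :: real assume "(norm f')\<^sup>2 \<le> lam\<^sup>2"
    thus "primal_obj l m1 \<phi> x y fs bs \<rho>s \<le> primal_obj l m1 \<phi> x y f' b' \<rho>'"
      using opt nsq by (simp add: Fp)
  next
    show "ereal (primal_obj l m1 \<phi> x y fs bs \<rho>s) = - (INF t \<in> {cp + cn + lam * norm (fp - fn) | cp cn fp fn.
                    fp \<in> uset l m1 \<phi> x Mp cp \<and> fn \<in> uset l m1 \<phi> x Mn cn}. ereal t)"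
      using INFeq unfolding D_def[symmetric] by (simp add: Fp Fs_def)
  qed
qed


end
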